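(* Let $G=\mathbb{Z}_2$ or $G=\mathbb{Z}_2\times\mathbb{Z}_2$ and $m\ge3$. Then the set $Y_{G,m}$ defined in the context is not convex.
   Context: $G$ is written additively with identity $0$; for $G=\mathbb{Z}_2$ the characters are $\hat g(h)=(-1)^{gh}$, and for $G=\mathbb{Z}_2\times\mathbb{Z}_2$ they are $\widehat{(a,b)}((c,d))=(-1)^{ac+bd}$. For $\mathbf g,\mathbf h\in G^m$ let $\widehat{\mathbf g}(\mathbf h)=\prod_{x=1}^m\hat g_x(h_x)$. Let $\Delta$ be the probability simplex in $\mathbb{R}^{G^m}$ and let $q$-space be $\{H\mathbf p:\mathbf p\in\Delta\}$, where $(H\mathbf p)_{\mathbf g}=\sum_{\mathbf h\in G^m}\widehat{\mathbf g}(\mathbf h)p_{\mathbf h}$. A split is a bipartition of the taxon set $\{1,\dots,m\}$ into two nonempty parts; for a split $s$, $\Lambda(s)$ denotes the part not containing taxon $m$. For a split $s$ and $h\in G$, $\boldsymbol\rho(s,h)\in G^m$ assigns $h$ to each taxon in $\Lambda(s)$ and $0$ to the others. $Y_{G,m}$ is the set of points $\mathbf q$ of $q$-space such that for every split $s$ and every $h\in G\setminus\{0\}$, $$\prod_{\mathbf g\in G^m:\ \widehat{\boldsymbol\rho(s,h)}(\mathbf g)=1} q_{\mathbf g}\ \ge\ \prod_{\mathbf g\in G^m:\ \widehat{\boldsymbol\rho(s,h)}(\mathbf g)=-1} q_{\mathbf g}.$$ *)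

theory Defs
  imports "HOL-Analysis.Analysis"
begin

text \<open>A finite abelian group G is described by its identity z and its character
 table chi, where chi g h is the value of the character of g at h.
 Taxa 1..m are represented by indices 0..m-1; taxon m is index m-1.
 Elements of G^m are functions on {0..<m} (extensional, as in PiE).\<close>

definition Gm :: "nat \<Rightarrow> (nat \<Rightarrow> 'g) set" where
  "Gm m = PiE {0..<m} (\<lambda>_. UNIV)"

definition hatv :: "('g \<Rightarrow> 'g \<Rightarrow> real) \<Rightarrow> nat \<Rightarrow> (nat \<Rightarrow> 'g) \<Rightarrow> (nat \<Rightarrow> 'g) \<Rightarrow> real" where
  "hatv chi m g h = (\<Prod>x<m. chi (g x) (h x))"

definition prob_simplex :: "nat \<Rightarrow> ((nat \<Rightarrow> 'g) \<Rightarrow> real) set" where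
  "prob_simplex m = {p. (\<forall>h\<in>Gm m. 0 \<le> p h) \<and> (\<forall>h. h \<notin> Gm m \<longrightarrow> p h = 0)
                   \<and> sum p (Gm m) = 1}"

definition Hmap :: "('g \<Rightarrow> 'g \<Rightarrow> real) \<Rightarrow> nat \<Rightarrow> ((nat \<Rightarrow> 'g) \<Rightarrow> real) \<Rightarrow> ((nat \<Rightarrow> 'g) \<Rightarrow> real)" where
  "Hmap chi m p = (\<lambda>g. if g \<in> Gm m then (\<Sum>h\<in>Gm m. hatv chi m g h * p h) else 0)"

definition qspace :: "('g::finite \<Rightarrow> 'g \<Rightarrow> real) \<Rightarrow> nat \<Rightarrow> ((nat \<Rightarrow> 'g) \<Rightarrow> real) set" where
  "qspace chi m = Hmap chi m ` prob_simplex m"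

definition is_split :: "nat \<Rightarrow> nat set set \<Rightarrow> bool" where
  "is_split m s \<longleftrightarrow> (\<exists>A B. s = {A, B} \<and> A \<noteq> {} \<and> B \<noteq> {} \<and> A \<inter> B = {} \<and> A \<union> B = {0..<m})"

definition Lambda :: "nat \<Rightarrow> nat set set \<Rightarrow> nat set" where
  "Lambda m s = (THE A. A \<in> s \<and> m - 1 \<notin> A)"

definition rho :: "'g \<Rightarrow> nat \<Rightarrow> nat set set \<Rightarrow> 'g \<Rightarrow> (nat \<Rightarrow> 'g)" where
  "rho z m s h = restrict (\<lambda>x. if x \<in> Lambda m s then h else z) {0..<m}"

definition Yset :: "'g \<Rightarrow> ('g::finite \<Rightarrow> 'g \<Rightarrow> real) \<Rightarrow> nat \<Rightarrow> ((nat \<Rightarrow> 'g) \<Rightarrow> real) set" where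
  "Yset z chi m = {q \<in> qspace chi m. \<forall>s h. is_split m s \<longrightarrow> h \<noteq> z \<longrightarrow>
      (\<Prod>g\<in>{g\<in>Gm m. hatv chi m (rho z m s h) g = 1}. q g)
        \<ge> (\<Prod>g\<in>{g\<in>Gm m. hatv chi m (rho z m s h) g = -1}. q g)}"

definition convex_fun_set :: "('a \<Rightarrow> real) set \<Rightarrow> bool" where
  "convex_fun_set S \<longleftrightarrow> (\<forall>x\<in>S. \<forall>y\<in>S. \<forall>t::real. 0 \<le> t \<and> t \<le> 1 \<longrightarrow>
      (\<lambda>i. t * x i + (1 - t) * y i) \<in> S)"

text \<open>Z_2 = bool (False = 0, True = 1), characters (-1)^(gh).\<close>
definition chiZ2 :: "bool \<Rightarrow> bool \<Rightarrow> real" where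
  "chiZ2 g h = (-1) ^ (of_bool g * of_bool h)"

text \<open>Z_2 x Z_2 = bool x bool, characters (-1)^(ac+bd).\<close>
definition chiZ2Z2 :: "bool \<times> bool \<Rightarrow> bool \<times> bool \<Rightarrow> real" where
  "chiZ2Z2 g h = (case g of (a, b) \<Rightarrow> case h of (c, d) \<Rightarrow>
      (-1) ^ (of_bool a * of_bool c + of_bool b * of_bool d))"

end

theory Submission
  imports Defs
begin

lemma prod_01:
  fixes f :: "nat \<Rightarrow> real"
  assumes "m \<ge> 2" "\<And>x. x < m \<Longrightarrow> x \<noteq> 0 \<Longrightarrow> x \<noteq> 1 \<Longrightarrow> f x = 1"
  shows "(\<Prod>x<m. f x) = f 0 * f 1"
proof -
  have "(\<Prod>x<m. f x) = (\<Prod>x\<in>{0,1}. f x)"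
    by (rule prod.mono_neutral_right) (use assms in auto)
  then show ?thesis by simp
qed

lemma pm_of_abs: "\<bar>x::real\<bar> = 1 \<Longrightarrow> x = 1 \<or> x = -1"
  by (auto simp: abs_if split: if_splits)

locale chisys =
  fixes z :: "'g::finite" and chi :: "'g \<Rightarrow> 'g \<Rightarrow> real"
    and add :: "'g \<Rightarrow> 'g \<Rightarrow> 'g" and e :: 'g
  assumes sym: "chi a b = chi b a"
    and mult: "chi g (add a b) = chi g a * chi g b"
    and pm: "chi a b = 1 \<or> chi a b = -1"
    and chiz: "chi g z = 1"
    and nontriv: "h \<noteq> z \<Longrightarrow> \<exists>a. chi h a = -1"
    and ee: "chi e e = -1"
begin

lemma chiz': "chi z g = 1" using sym chiz by metis

lemma ez: "e \<noteq> z" using ee chiz by force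

lemma hatv_sym: "hatv chi m g h = hatv chi m h g"
  unfolding hatv_def using sym by metis

lemma hatv_abs: "\<bar>hatv chi m g h\<bar> = 1"
proof -
  have "\<bar>hatv chi m g h\<bar> = (\<Prod>x<m. \<bar>chi (g x) (h x)\<bar>)"
    unfolding hatv_def by (rule abs_prod)
  also have "\<dots> = 1" using pm by (intro prod.neutral) (metis abs_1 abs_minus_cancel)
  finally show ?thesis .
qed

lemma hatv_pm: "hatv chi m g h = 1 \<or> hatv chi m g h = -1"
  using pm_of_abs[OF hatv_abs] .

definition zv :: "nat \<Rightarrow> nat \<Rightarrow> 'g" where
  "zv m = restrict (\<lambda>_. z) {0..<m}"

definition vadd :: "nat \<Rightarrow> (nat \<Rightarrow> 'g) \<Rightarrow> (nat \<Rightarrow> 'g) \<Rightarrow> nat \<Rightarrow> 'g" where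
  "vadd m k c = restrict (\<lambda>x. add (k x) (c x)) {0..<m}"

lemma zv_Gm: "zv m \<in> Gm m" by (simp add: zv_def Gm_def)

lemma vadd_Gm: "vadd m k c \<in> Gm m" by (simp add: vadd_def Gm_def)

lemma hatv_zv: "hatv chi m g (zv m) = 1"
  unfolding hatv_def zv_def by (intro prod.neutral) (simp add: chiz)

lemma hatv_vadd: "hatv chi m g (vadd m k c) = hatv chi m g k * hatv chi m g c"
  unfolding hatv_def vadd_def prod.distrib[symmetric]
  by (intro prod.cong) (auto simp: mult)

lemma finite_Gm: "finite (Gm m :: (nat \<Rightarrow> 'g) set)"
  unfolding Gm_def by (intro finite_PiE) auto

lemma Lambda_props:
  assumes "is_split m s" "m \<ge> 1"
  shows "Lambda m s \<noteq> {} \<and> Lambda m s \<subseteq> {0..<m}"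
proof -
  obtain A B where s: "s = {A, B}" "A \<noteq> {}" "B \<noteq> {}" "A \<inter> B = {}" "A \<union> B = {0..<m}"
    using assms(1) unfolding is_split_def by blast
  have mm: "m - 1 \<in> A \<union> B" using s(5) assms(2) by auto
  show ?thesis
  proof (cases "m - 1 \<in> B")
    case True
    then have "m - 1 \<notin> A" using s(4) by blast
    then have "Lambda m s = A" unfolding Lambda_def s(1)
      using True by (intro the_equality) auto
    then show ?thesis using s by auto
  next
    case False
    then have "m - 1 \<in> A" using mm by blast
    then have "Lambda m s = B" unfolding Lambda_def s(1)
      using False by (intro the_equality) auto
    then show ?thesis using s by auto
  qed
qed

definition pt :: "nat \<Rightarrow> (nat \<Rightarrow> 'g) \<Rightarrow> (nat \<Rightarrow> 'g) \<Rightarrow> real" where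
  "pt m u h = (if h = zv m then 1/2 else 0) + (if h = u then 1/2 else 0)"

lemma pt_simplex:
  assumes "u \<in> Gm m"
  shows "pt m u \<in> prob_simplex m"
proof -
  have "sum (pt m u) (Gm m) = 1"
    unfolding pt_def using assms zv_Gm[of m] finite_Gm[of m] by (simp add: sum.distrib)
  then show ?thesis unfolding prob_simplex_def pt_def using assms zv_Gm by auto
qed

lemma Hmap_pt:
  assumes "u \<in> Gm m" "g \<in> Gm m"
  shows "Hmap chi m (pt m u) g = (1 + hatv chi m g u) / 2"
proof -
  have "Hmap chi m (pt m u) g = (\<Sum>h\<in>Gm m. hatv chi m g h * pt m u h)"
    unfolding Hmap_def using assms by simp
  also have "\<dots> = (\<Sum>h\<in>Gm m. (if h = zv m then hatv chi m g h / 2 else 0))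
      + (\<Sum>h\<in>Gm m. (if h = u then hatv chi m g h / 2 else 0))"
    unfolding pt_def sum.distrib[symmetric] by (intro sum.cong) auto
  also have "\<dots> = (1 + hatv chi m g u) / 2"
    using assms zv_Gm[of m] finite_Gm[of m] by (simp add: hatv_zv add_divide_distrib)
  finally show ?thesis .
qed

lemma qv_Y:
  assumes u: "u \<in> Gm m" and m1: "m \<ge> 1"
  shows "Hmap chi m (pt m u) \<in> Yset z chi m"
proof -
  let ?q = "Hmap chi m (pt m u)"
  have inq: "?q \<in> qspace chi m" unfolding qspace_def using pt_simplex[OF u] by blast
  have qval: "\<And>g. g \<in> Gm m \<Longrightarrow> ?q g = (1 + hatv chi m g u) / 2"
    using Hmap_pt[OF u] by blast
  have qnn: "\<And>g. g \<in> Gm m \<Longrightarrow> ?q g \<ge> 0"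
    using qval hatv_pm by (metis add.right_inverse divide_nonneg_nonneg order_refl zero_le_numeral one_add_one le_numeral_extra(4)) 
  have ineq: "(\<Prod>g\<in>{g\<in>Gm m. hatv chi m (rho z m s h) g = 1}. ?q g)
        \<ge> (\<Prod>g\<in>{g\<in>Gm m. hatv chi m (rho z m s h) g = -1}. ?q g)"
    if sp: "is_split m s" and hz: "h \<noteq> z" for s h
  proof -
    define \<rho> where "\<rho> = rho z m s h"
    define K where "K = {g\<in>Gm m. hatv chi m \<rho> g = 1}"
    define C where "C = {g\<in>Gm m. hatv chi m \<rho> g = -1}"
    obtain x0 where x0: "x0 \<in> Lambda m s" "x0 < m"
    proof -
      have "Lambda m s \<noteq> {}" "Lambda m s \<subseteq> {0..<m}" using Lambda_props[OF sp m1] by auto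
      then obtain x where "x \<in> Lambda m s" by blast
      then show ?thesis using that \<open>Lambda m s \<subseteq> {0..<m}\<close> by auto
    qed
    obtain a where a: "chi h a = -1" using nontriv[OF hz] by blast
    define c where "c = restrict (\<lambda>x. if x = x0 then a else z) {0..<m}"
    have cG: "c \<in> Gm m" by (simp add: c_def Gm_def)
    have "hatv chi m \<rho> c = (\<Prod>x<m. if x = x0 then -1 else 1)"
      unfolding hatv_def by (intro prod.cong) (auto simp: c_def \<rho>_def rho_def x0 a chiz)
    also have "\<dots> = -1" using x0 by simp
    finally have cC: "c \<in> C" using cG by (simp add: C_def)
    have finK: "finite K" and finC: "finite C" using finite_Gm by (auto simp: K_def C_def)
    show ?thesis
    proof (cases "\<forall>g\<in>C. hatv chi m g u = 1")
      case True
      have allK: "\<forall>k\<in>K. hatv chi m k u = 1"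
      proof
        fix k assume k: "k \<in> K"
        have "hatv chi m \<rho> (vadd m k c) = -1"
          using k cC by (simp add: hatv_vadd K_def C_def)
        then have "vadd m k c \<in> C" using vadd_Gm by (simp add: C_def)
        then have "hatv chi m u (vadd m k c) = 1" using True hatv_sym by metis
        moreover have "hatv chi m u c = 1" using True cC hatv_sym by metis
        ultimately show "hatv chi m k u = 1" using hatv_sym by (metis hatv_vadd mult.right_neutral)
      qed
      have "(\<Prod>g\<in>K. ?q g) = 1"
      proof (intro prod.neutral ballI)
        fix g assume g: "g \<in> K"
        then have "g \<in> Gm m" "hatv chi m g u = 1" using allK by (auto simp: K_def)
        then show "?q g = 1" using qval[of g] by simp
      qed
      moreover have "(\<Prod>g\<in>C. ?q g) = 1"
      proof (intro prod.neutral ballI)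
        fix g assume g: "g \<in> C"
        then have "g \<in> Gm m" "hatv chi m g u = 1" using True by (auto simp: C_def)
        then show "?q g = 1" using qval[of g] by simp
      qed
      ultimately show ?thesis by (simp add: K_def C_def \<rho>_def)
    next
      case False
      then obtain g where g: "g \<in> C" "hatv chi m g u \<noteq> 1" by blast
      then have "hatv chi m g u = -1" using hatv_pm by metis
      moreover have "g \<in> Gm m" using g by (simp add: C_def)
      ultimately have "?q g = 0" using qval[of g] by simp
      then have "(\<Prod>g\<in>C. ?q g) = 0" using g finC by (metis prod_zero)
      moreover have "(\<Prod>g\<in>K. ?q g) \<ge> 0"
        using qnn by (intro prod_nonneg) (auto simp: K_def)
      ultimately show ?thesis by (simp add: K_def C_def \<rho>_def)
    qed
  qed
  show ?thesis unfolding Yset_def using inq ineq by blast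
qed

definition u1 :: "nat \<Rightarrow> nat \<Rightarrow> 'g" where
  "u1 m = restrict (\<lambda>x. if x = 1 then e else z) {0..<m}"
definition u2 :: "nat \<Rightarrow> nat \<Rightarrow> 'g" where
  "u2 m = restrict (\<lambda>x. if x = 0 \<or> x = 1 then e else z) {0..<m}"

lemma hatv_u1: "m \<ge> 2 \<Longrightarrow> hatv chi m g (u1 m) = chi (g 1) e"
proof -
  assume m2: "m \<ge> 2"
  have "hatv chi m g (u1 m) = chi (g 0) (u1 m 0) * chi (g 1) (u1 m 1)"
    unfolding hatv_def by (rule prod_01) (use m2 in \<open>auto simp: u1_def chiz\<close>)
  then show ?thesis using m2 by (simp add: u1_def chiz)
qed

lemma hatv_u2: "m \<ge> 2 \<Longrightarrow> hatv chi m g (u2 m) = chi (g 0) e * chi (g 1) e"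
proof -
  assume m2: "m \<ge> 2"
  have "hatv chi m g (u2 m) = chi (g 0) (u2 m 0) * chi (g 1) (u2 m 1)"
    unfolding hatv_def by (rule prod_01) (use m2 in \<open>auto simp: u2_def chiz\<close>)
  then show ?thesis using m2 by (simp add: u2_def)
qed

lemma nonconvex:
  assumes m2: "m \<ge> 2"
  shows "\<not> convex_fun_set (Yset z chi m)"
proof
  assume cv: "convex_fun_set (Yset z chi m)"
  have G1: "u1 m \<in> Gm m" "u2 m \<in> Gm m" by (simp_all add: u1_def u2_def Gm_def)
  let ?q1 = "Hmap chi m (pt m (u1 m))"
  let ?q2 = "Hmap chi m (pt m (u2 m))"
  define mid where "mid = (\<lambda>i. (1/2::real) * ?q1 i + (1 - 1/2) * ?q2 i)"
  have "?q1 \<in> Yset z chi m" "?q2 \<in> Yset z chi m" using qv_Y G1 m2 by auto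
  moreover have "0 \<le> (1/2::real) \<and> (1/2::real) \<le> 1" by simp
  ultimately have "mid \<in> Yset z chi m"
    using cv unfolding convex_fun_set_def mid_def by blast
  then have mY: "\<forall>s h. is_split m s \<longrightarrow> h \<noteq> z \<longrightarrow>
      (\<Prod>g\<in>{g\<in>Gm m. hatv chi m (rho z m s h) g = 1}. mid g)
        \<ge> (\<Prod>g\<in>{g\<in>Gm m. hatv chi m (rho z m s h) g = -1}. mid g)"
    unfolding Yset_def by blast
  define s0 where "s0 = ({{0}, {1..<m}} :: nat set set)"
  have sp: "is_split m s0" unfolding is_split_def s0_def using m2
    by (intro exI[of _ "{0}"] exI[of _ "{1..<m}"]) auto
  have Lam: "Lambda m s0 = {0}" unfolding Lambda_def s0_def using m2
    by (intro the_equality) auto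
  define \<rho> where "\<rho> = rho z m s0 e"
  have rho_eq: "\<And>x. x < m \<Longrightarrow> \<rho> x = (if x = 0 then e else z)"
    by (simp add: \<rho>_def rho_def Lam)
  have hr: "hatv chi m \<rho> g = chi e (g 0)" for g
  proof -
    have "hatv chi m \<rho> g = chi (\<rho> 0) (g 0) * chi (\<rho> 1) (g 1)"
      unfolding hatv_def by (rule prod_01) (use m2 in \<open>auto simp: rho_eq chiz'\<close>)
    then show ?thesis using m2 by (simp add: rho_eq chiz')
  qed
  have midv: "mid g = (1/2) * ((1 + hatv chi m g (u1 m)) / 2) + (1/2) * ((1 + hatv chi m g (u2 m)) / 2)"
    if "g \<in> Gm m" for g
    unfolding mid_def by (simp only: Hmap_pt[OF G1(1) that] Hmap_pt[OF G1(2) that]) simp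
  have ineq: "(\<Prod>g\<in>{g\<in>Gm m. hatv chi m \<rho> g = 1}. mid g)
        \<ge> (\<Prod>g\<in>{g\<in>Gm m. hatv chi m \<rho> g = -1}. mid g)"
    using mY sp ez unfolding \<rho>_def by blast
  have k0: "u1 m \<in> {g\<in>Gm m. hatv chi m \<rho> g = 1}"
    using G1 m2 by (simp add: hr u1_def chiz)
  have "u1 m 1 = e" "u1 m 0 = z" using m2 by (auto simp: u1_def)
  then have "hatv chi m (u1 m) (u1 m) = -1" "hatv chi m (u1 m) (u2 m) = -1"
    using m2 by (simp_all add: hatv_u1 hatv_u2 ee chiz')
  then have "mid (u1 m) = 0"
    using midv[OF G1(1)] by simp
  then have L: "(\<Prod>g\<in>{g\<in>Gm m. hatv chi m \<rho> g = 1}. mid g) = 0"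
    using k0 finite_Gm[of m] by (intro prod_zero) auto
  have "(\<Prod>g\<in>{g\<in>Gm m. hatv chi m \<rho> g = -1}. mid g) > 0"
  proof (intro prod_pos ballI)
    fix g assume g: "g \<in> {g\<in>Gm m. hatv chi m \<rho> g = -1}"
    then have gG: "g \<in> Gm m" and c: "chi e (g 0) = -1" by (auto simp: hr)
    have "hatv chi m g (u2 m) = - hatv chi m g (u1 m)"
      using c m2 sym by (simp add: hatv_u1 hatv_u2)
    then show "mid g > 0" using midv[OF gG] by (simp add: field_simps)
  qed
  then show False using ineq L by simp
qed

end

interpretation Z2: chisys False chiZ2 "\<lambda>a b. a \<noteq> b" True
proof
  fix a b g :: bool
  show "chiZ2 a b = chiZ2 b a" by (simp add: chiZ2_def mult.commute)
  show "chiZ2 g (a \<noteq> b) = chiZ2 g a * chiZ2 g b" by (cases a; cases b; cases g) (simp_all add: chiZ2_def)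
  show "chiZ2 a b = 1 \<or> chiZ2 a b = -1" by (cases a; cases b) (simp_all add: chiZ2_def)
  show "chiZ2 g False = 1" by (simp add: chiZ2_def)
  show "chiZ2 True True = -1" by (simp add: chiZ2_def)
next
  fix h :: bool assume "h \<noteq> False"
  then show "\<exists>a. chiZ2 h a = -1" by (intro exI[of _ True]) (simp add: chiZ2_def)
qed

interpretation Z2Z2: chisys "(False, False)" chiZ2Z2 "\<lambda>x y. (fst x \<noteq> fst y, snd x \<noteq> snd y)" "(True, False)"
proof
  fix a b g :: "bool \<times> bool"
  show "chiZ2Z2 a b = chiZ2Z2 b a" by (cases a; cases b) (simp add: chiZ2Z2_def mult.commute)
  show "chiZ2Z2 g (fst a \<noteq> fst b, snd a \<noteq> snd b) = chiZ2Z2 g a * chiZ2Z2 g b"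
    by (cases a; cases b; cases g) (auto simp: chiZ2Z2_def)
  show "chiZ2Z2 a b = 1 \<or> chiZ2Z2 a b = -1" by (cases a; cases b) (auto simp: chiZ2Z2_def)
  show "chiZ2Z2 g (False, False) = 1" by (cases g) (simp add: chiZ2Z2_def)
  show "chiZ2Z2 (True, False) (True, False) = -1" by (simp add: chiZ2Z2_def)
next
  fix h :: "bool \<times> bool" assume "h \<noteq> (False, False)"
  then show "\<exists>a. chiZ2Z2 h a = -1"
    by (cases h) (auto simp: chiZ2Z2_def intro: exI[of _ "(True,False)"] exI[of _ "(False,True)"])
qed

theorem mainTheorem10:
  fixes m :: nat
  assumes "m \<ge> 3"
  shows "\<not> convex_fun_set (Yset False chiZ2 m)
       \<and> \<not> convex_fun_set (Yset (False, False) chiZ2Z2 m)"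
  using Z2.nonconvex Z2Z2.nonconvex assms by simp

end
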